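(* Let $M,N\in\Lambda^{001}$. If for every $d\in\mathbf N$ there exists a $d$-positive resource term $s_d\in\mathcal T(M)\cap\mathcal T(N)$, then $M=N$.
   Context: $\Lambda^{001}$: possibly infinite λ-terms (trees of variables, abstractions $\lambda x.M$ and applications $(M)N$) whose infinite branches all enter infinitely often the argument position $N$ of an application, up to α-equivalence. Resource terms: $s::=x\mid\lambda x.s\mid\langle s\rangle\bar t$, with $\bar t=[t_1,\dots,t_n]$ a finite multiset of resource terms. Taylor approximation $\ltimes$ is inductive: $x\ltimes x$; $s\ltimes M\Rightarrow\lambda x.s\ltimes\lambda x.M$; ($s\ltimes M$ and $t_i\ltimes N$ for all $i$) $\Rightarrow\langle s\rangle[t_1,\dots,t_n]\ltimes(M)N$; $\mathcal T(M)=\{s : s\ltimes M\}$. $d$-positive resource terms: every resource term is 0-positive; for $d\ge1$, the $d$-positive terms are generated by $s::=x\mid\lambda x.s\mid\langle s\rangle\bar t$ where $s$ is $d$-positive and $\bar t$ is a non-empty multiset of $(d-1)$-positive terms. *)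

theory Defs
  imports Main "HOL-Library.Multiset"
begin

text \<open>Possibly infinite lambda-terms, in de Bruijn notation (so alpha-equivalence is equality).\<close>
codatatype lterm = Var nat | Lam lterm | App lterm lterm

inductive reach :: "lterm \<Rightarrow> lterm \<Rightarrow> bool" where
  reach_refl: "reach M M"
| reach_lam: "reach M (Lam N) \<Longrightarrow> reach M N"
| reach_fun: "reach M (App N P) \<Longrightarrow> reach M N"
| reach_arg: "reach M (App N P) \<Longrightarrow> reach M P"

inductive finite_spine :: "lterm \<Rightarrow> bool" where
  "finite_spine (Var n)"
| "finite_spine M \<Longrightarrow> finite_spine (Lam M)"
| "finite_spine M \<Longrightarrow> finite_spine (App M N)"

text \<open>Lambda^{001}: every infinite branch enters argument positions infinitely often,
  i.e. no subterm has an infinite spine.\<close>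
definition Lambda001 :: "lterm \<Rightarrow> bool" where
  "Lambda001 M \<longleftrightarrow> (\<forall>N. reach M N \<longrightarrow> finite_spine N)"

datatype rterm = RVar nat | RLam rterm | RApp rterm "rterm multiset"

inductive taylor :: "rterm \<Rightarrow> lterm \<Rightarrow> bool" where
  "taylor (RVar x) (Var x)"
| "taylor s M \<Longrightarrow> taylor (RLam s) (Lam M)"
| "taylor s M \<Longrightarrow> (\<forall>t\<in>#ts. taylor t N) \<Longrightarrow> taylor (RApp s ts) (App M N)"

inductive positive :: "nat \<Rightarrow> rterm \<Rightarrow> bool" where
  "positive 0 s"
| "positive (Suc d) (RVar x)"
| "positive (Suc d) s \<Longrightarrow> positive (Suc d) (RLam s)"
| "positive (Suc d) s \<Longrightarrow> ts \<noteq> {#} \<Longrightarrow> (\<forall>t\<in>#ts. positive d t) \<Longrightarrow> positive (Suc d) (RApp s ts)"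

end

theory Submission
  imports Defs
begin

inductive_cases TV: "taylor (RVar x) M"
inductive_cases TL: "taylor (RLam s) M"
inductive_cases TA: "taylor (RApp s ts) M"
inductive_cases PL: "positive (Suc d) (RLam s)"
inductive_cases PA: "positive (Suc d) (RApp s ts)"

inductive_cases TL2: "taylor s (Lam M)"
inductive_cases TA2: "taylor s (App M N)"

definition RR :: "lterm \<Rightarrow> lterm \<Rightarrow> bool" where
  "RR M N \<longleftrightarrow> (\<forall>d. \<exists>s. positive d s \<and> taylor s M \<and> taylor s N)"

lemma RR_step:
  assumes "RR M N"
  shows "(\<exists>x. M = Var x \<and> N = Var x) \<or> (\<exists>M' N'. M = Lam M' \<and> N = Lam N' \<and> RR M' N')
     \<or> (\<exists>M1 M2 N1 N2. M = App M1 M2 \<and> N = App N1 N2 \<and> RR M1 N1 \<and> RR M2 N2)"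
proof -
  obtain s0 where s0: "taylor s0 M" "taylor s0 N" using assms unfolding RR_def by blast
  show ?thesis
  proof (cases s0)
    case (RVar x)
    then show ?thesis using s0 by (auto elim!: TV TL TA TL2 TA2)
  next
    case (RLam s')
    then obtain M' N' where MN: "M = Lam M'" "N = Lam N'" using s0 by (auto elim!: TV TL TA TL2 TA2)
    have "RR M' N'" unfolding RR_def
    proof
      fix d
      obtain s where s: "positive d s" "taylor s M" "taylor s N" using assms unfolding RR_def by blast
      then obtain t where "s = RLam t" "taylor t M'" "taylor t N'" using MN
        by (auto elim!: TV TL TA TL2 TA2)
      moreover have "positive d t"
      proof (cases d)
        case 0 then show ?thesis by (auto intro: positive.intros)
      next
        case (Suc e) then show ?thesis using s(1) \<open>s = RLam t\<close> by (auto elim: PL PA)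
      qed
      ultimately show "\<exists>s. positive d s \<and> taylor s M' \<and> taylor s N'" by blast
    qed
    then show ?thesis using MN by blast
  next
    case (RApp s' ts)
    then obtain M1 M2 N1 N2 where MN: "M = App M1 M2" "N = App N1 N2" using s0 by (auto elim!: TV TL TA TL2 TA2)
    have "RR M1 N1" unfolding RR_def
    proof
      fix d
      obtain s where s: "positive d s" "taylor s M" "taylor s N" using assms unfolding RR_def by blast
      then obtain t us where "s = RApp t us" "taylor t M1" "taylor t N1" using MN
        by (auto elim!: TV TL TA TL2 TA2)
      moreover have "positive d t"
      proof (cases d)
        case 0 then show ?thesis by (auto intro: positive.intros)
      next
        case (Suc e) then show ?thesis using s(1) \<open>s = RApp t us\<close> by (auto elim: PL PA)
      qed
      ultimately show "\<exists>s. positive d s \<and> taylor s M1 \<and> taylor s N1" by blast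
    qed
    moreover have "RR M2 N2" unfolding RR_def
    proof
      fix d
      obtain s where s: "positive (Suc d) s" "taylor s M" "taylor s N" using assms unfolding RR_def by blast
      then obtain t us where us: "s = RApp t us" "\<forall>u\<in>#us. taylor u M2" "\<forall>u\<in>#us. taylor u N2" using MN
        by (auto elim!: TV TL TA TL2 TA2)
      have "us \<noteq> {#}" "\<forall>u\<in>#us. positive d u" using s(1) us(1) by (auto elim: PL PA)
      then obtain u where "u \<in># us" "positive d u" by blast
      then show "\<exists>s. positive d s \<and> taylor s M2 \<and> taylor s N2" using us by blast
    qed
    ultimately show ?thesis using MN by blast
  qed
qed

theorem mainTheorem19:
  assumes "Lambda001 M" and "Lambda001 N"
    and "\<forall>d. \<exists>s. positive d s \<and> taylor s M \<and> taylor s N"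
  shows "M = N"
proof -
  have "RR M N" using assms(3) unfolding RR_def .
  then show ?thesis
  proof (coinduction arbitrary: M N rule: lterm.coinduct)
    case (Eq_lterm M N)
    from RR_step[OF Eq_lterm] show ?case by auto
  qed
qed

end
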